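(* Normalize $\operatorname{var}(X)=1$ and $\operatorname{var}(W_1)=I_{d_1}$, and suppose $\operatorname{var}(Y,X,W_1)$ is positive definite. Then $b\in\mathcal B(r_X,r_Y,c)$ if and only if there exists $(p_1,g_1)\in\mathbb R^{d_1}\times\mathbb R^{d_1}$ with $(p_1'r_X)(g_1'r_Y)(1-\|c\|^2)=k_1-bk_0$; $(I+cr_Y')g_1=\sigma_{W_1,Y}-b\sigma_{W_1,X}$; $(I+cr_X')p_1=\sigma_{W_1,X}$; $(g_1'r_Y)^2(1-\|c\|^2)<k_0(\beta_{\text{med}}-b)^2+\operatorname{var}(Y^{\perp X,W_1})$; $(p_1'r_X)^2(1-\|c\|^2)<k_0$; $\|c\|^2<1$.
   Context: For random vectors $A,B$ with $\operatorname{var}(B)$ invertible, $A^{\perp B}=A-\operatorname{cov}(A,B)\operatorname{var}(B)^{-1}B$. $\sigma_{A,B}=\operatorname{cov}(A,B)$ (column vectors when $A=W_1$). $\beta_{\text{med}}$ is the coefficient on $X$ in the linear projection of $Y$ on $(1,X,W_1)$. $k_0=\operatorname{var}(X^{\perp W_1})$, $k_1=\operatorname{cov}(Y^{\perp W_1},X^{\perp W_1})$. For $r_X,r_Y,c\in\mathbb R^{d_1}$, $\mathcal B(r_X,r_Y,c)$ is the set of $b\in\mathbb R$ such that for some $(p_1,g_1)\in\mathbb R^{d_1}\times\mathbb R^{d_1}$ (with $\Sigma_{\text{obs}}=\operatorname{var}(W_1)$): $\operatorname{cov}(Y,X)=b\operatorname{var}(X)+g_1'(\Sigma_{\text{obs}}+cr_X'+r_Yc'+r_Yr_X')p_1$;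 $\operatorname{cov}(Y,W_1)=b\operatorname{cov}(X,W_1)+g_1'(\Sigma_{\text{obs}}+r_Yc')$; $\operatorname{cov}(X,W_1)=p_1'(\Sigma_{\text{obs}}+r_Xc')$; $\operatorname{var}(Y)>b^2\operatorname{var}(X)+g_1'(\Sigma_{\text{obs}}+r_Yr_Y'+2r_Yc')g_1+2bg_1'(\Sigma_{\text{obs}}+cr_X'+r_Yc'+r_Yr_X')p_1$; $\operatorname{var}(X)>p_1'(\Sigma_{\text{obs}}+2r_Xc'+r_Xr_X')p_1$; $1>c'\Sigma_{\text{obs}}^{-1}c$. *)

theory Defs
  imports "HOL-Analysis.Analysis"
begin

text \<open>The joint second-moment structure of (Y, X, W1) is represented by its covariance
entries: vY = var Y, vX = var X, sYX = cov(Y,X), sWX = cov(W1,X), sWY = cov(W1,Y),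
Sig = var W1 (a d1 x d1 matrix, with d1 = CARD('d)).\<close>

definition outer :: "real^'d \<Rightarrow> real^'d \<Rightarrow> real^'d^'d" where
  "outer u v = (\<chi> i j. u $ i * v $ j)"

definition joint_pd :: "real \<Rightarrow> real \<Rightarrow> real \<Rightarrow> real^'d \<Rightarrow> real^'d \<Rightarrow> real^'d^'d \<Rightarrow> bool" where
  "joint_pd vY vX sYX sWX sWY Sig \<longleftrightarrow>
     (\<forall>a e (v::real^'d). (a \<noteq> 0 \<or> e \<noteq> 0 \<or> v \<noteq> 0) \<longrightarrow>
        a^2 * vY + e^2 * vX + v \<bullet> (Sig *v v) + 2 * a * e * sYX
        + 2 * a * (v \<bullet> sWY) + 2 * e * (v \<bullet> sWX) > 0)"

text \<open>Coefficients (b, gamma) of the linear projection of Y on (1, X, W1),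
characterised by the normal equations cov(Y - bX - gamma'W1, X) = 0 and
cov(Y - bX - gamma'W1, W1) = 0.\<close>
definition proj_coef :: "real \<Rightarrow> real \<Rightarrow> real^'d \<Rightarrow> real^'d \<Rightarrow> real^'d^'d \<Rightarrow> real \<times> (real^'d)" where
  "proj_coef vX sYX sWX sWY Sig =
     (THE (b, g). sYX = b * vX + g \<bullet> sWX \<and> sWY = b *\<^sub>R sWX + Sig *v g)"

definition beta_med :: "real \<Rightarrow> real \<Rightarrow> real^'d \<Rightarrow> real^'d \<Rightarrow> real^'d^'d \<Rightarrow> real" where
  "beta_med vX sYX sWX sWY Sig = fst (proj_coef vX sYX sWX sWY Sig)"

text \<open>var(Y^{perp X,W1}) = var(Y - b X - gamma'W1) at the projection coefficients.\<close>
definition var_Y_perp_XW :: "real \<Rightarrow> real \<Rightarrow> real \<Rightarrow> real^'d \<Rightarrow> real^'d \<Rightarrow> real^'d^'d \<Rightarrow> real" where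
  "var_Y_perp_XW vY vX sYX sWX sWY Sig =
     (let (b, g) = proj_coef vX sYX sWX sWY Sig in
        vY + b^2 * vX + g \<bullet> (Sig *v g) - 2 * b * sYX - 2 * (g \<bullet> sWY) + 2 * b * (g \<bullet> sWX))"

text \<open>k0 = var(X^{perp W1}),  k1 = cov(Y^{perp W1}, X^{perp W1}).\<close>
definition k0 :: "real \<Rightarrow> real^'d \<Rightarrow> real^'d^'d \<Rightarrow> real" where
  "k0 vX sWX Sig = vX - sWX \<bullet> (matrix_inv Sig *v sWX)"

definition k1 :: "real \<Rightarrow> real^'d \<Rightarrow> real^'d \<Rightarrow> real^'d^'d \<Rightarrow> real" where
  "k1 sYX sWX sWY Sig = sYX - sWY \<bullet> (matrix_inv Sig *v sWX)"

definition Bset :: "real \<Rightarrow> real \<Rightarrow> real \<Rightarrow> real^'d \<Rightarrow> real^'d \<Rightarrow> real^'d^'d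
     \<Rightarrow> real^'d \<Rightarrow> real^'d \<Rightarrow> real^'d \<Rightarrow> real set" where
  "Bset vY vX sYX sWX sWY Sig rX rY c =
     {b. \<exists>p1 g1.
        sYX = b * vX + g1 \<bullet> ((Sig + outer c rX + outer rY c + outer rY rX) *v p1) \<and>
        sWY = b *\<^sub>R sWX + (g1 v* (Sig + outer rY c)) \<and>
        sWX = p1 v* (Sig + outer rX c) \<and>
        vY > b^2 * vX + g1 \<bullet> ((Sig + outer rY rY + 2 *\<^sub>R outer rY c) *v g1)
             + 2 * b * (g1 \<bullet> ((Sig + outer c rX + outer rY c + outer rY rX) *v p1)) \<and>
        vX > p1 \<bullet> ((Sig + 2 *\<^sub>R outer rX c + outer rX rX) *v p1) \<and>
        1 > c \<bullet> (matrix_inv Sig *v c)}"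

end

theory Submission imports Defs begin

lemma minv1: "matrix_inv (mat 1 :: real^'d^'d) = mat 1"
proof -
  have "\<exists>A'::real^'d^'d. mat 1 ** A' = mat 1 \<and> A' ** mat 1 = mat 1" by (intro exI[of _ "mat 1"]) simp
  then have "mat 1 ** matrix_inv (mat 1 :: real^'d^'d) = mat 1"
    unfolding matrix_inv_def by (rule someI_ex[THEN conjunct1])
  then show ?thesis by simp
qed

lemma outer_mv: "outer u v *v x = (v \<bullet> x) *\<^sub>R (u::real^'d)"
  unfolding outer_def matrix_vector_mult_def vec_eq_iff inner_vec_def
  by (auto simp: sum_distrib_right intro!: sum.cong)

lemma outer_vm: "x v* outer u v = (x \<bullet> u) *\<^sub>R (v::real^'d)"
  unfolding outer_def vector_matrix_mult_def vec_eq_iff inner_vec_def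
  by (auto simp: sum_distrib_right intro!: sum.cong)

lemma smult_mv: "((k::real) *\<^sub>R A) *v (x::real^'d) = k *\<^sub>R (A *v x)"
  by (simp add: matrix_vector_mult_def vec_eq_iff sum_distrib_left mult_ac)

lemma proj1:
  fixes sYX :: real and sWX sWY :: "real^'d"
  assumes k0: "1 - sWX \<bullet> sWX > 0"
  defines "\<beta> \<equiv> (sYX - sWY \<bullet> sWX) / (1 - sWX \<bullet> sWX)"
  shows "proj_coef 1 sYX sWX sWY (mat 1) = (\<beta>, sWY - \<beta> *\<^sub>R sWX)"
  unfolding proj_coef_def
proof (rule the_equality)
  show "case (\<beta>, sWY - \<beta> *\<^sub>R sWX) of (b, g) \<Rightarrow> sYX = b * 1 + g \<bullet> sWX \<and> sWY = b *\<^sub>R sWX + mat 1 *v g"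
    using k0 by (simp add: \<beta>_def inner_diff_left field_simps)
next
  fix x assume "case x of (b, g) \<Rightarrow> sYX = b * 1 + g \<bullet> sWX \<and> sWY = b *\<^sub>R sWX + mat 1 *v g"
  then obtain b g where x: "x = (b, g)" and e1: "sYX = b + g \<bullet> sWX" and e2: "sWY = b *\<^sub>R sWX + g"
    by (cases x) auto
  have g: "g = sWY - b *\<^sub>R sWX" using e2 by simp
  have "sYX = b + sWY \<bullet> sWX - b * (sWX \<bullet> sWX)" using e1 by (simp add: g inner_diff_left)
  then have "b = \<beta>" using k0 by (simp add: \<beta>_def field_simps)
  then show "x = (\<beta>, sWY - \<beta> *\<^sub>R sWX)" using x g by simp
qed

theorem mainTheorem18:
  fixes vY sYX b :: real and sWX sWY rX rY c :: "real^'d"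
  assumes pd: "joint_pd vY 1 sYX sWX sWY (mat 1)"
  shows "b \<in> Bset vY 1 sYX sWX sWY (mat 1) rX rY c \<longleftrightarrow>
    (\<exists>p1 g1 :: real^'d.
       (p1 \<bullet> rX) * (g1 \<bullet> rY) * (1 - (norm c)^2) = k1 sYX sWX sWY (mat 1) - b * k0 1 sWX (mat 1) \<and>
       (mat 1 + outer c rY) *v g1 = sWY - b *\<^sub>R sWX \<and>
       (mat 1 + outer c rX) *v p1 = sWX \<and>
       (g1 \<bullet> rY)^2 * (1 - (norm c)^2) <
          k0 1 sWX (mat 1) * (beta_med 1 sYX sWX sWY (mat 1) - b)^2
          + var_Y_perp_XW vY 1 sYX sWX sWY (mat 1) \<and>
       (p1 \<bullet> rX)^2 * (1 - (norm c)^2) < k0 1 sWX (mat 1) \<and>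
       (norm c)^2 < 1)"
proof -
  have K0: "k0 1 sWX (mat 1) = 1 - sWX \<bullet> sWX" by (simp add: k0_def minv1)
  have K1: "k1 sYX sWX sWY (mat 1) = sYX - sWY \<bullet> sWX" by (simp add: k1_def minv1)
  have pos: "1 - sWX \<bullet> sWX > 0"
    using pd[unfolded joint_pd_def, rule_format, of 0 1 "- sWX"]
    by (simp add: inner_commute)
  define \<beta> where "\<beta> = (sYX - sWY \<bullet> sWX) / (1 - sWX \<bullet> sWX)"
  have P: "proj_coef 1 sYX sWX sWY (mat 1) = (\<beta>, sWY - \<beta> *\<^sub>R sWX)"
    using proj1[OF pos] by (simp add: \<beta>_def)
  have R: "k0 1 sWX (mat 1) * (beta_med 1 sYX sWX sWY (mat 1) - b)^2
          + var_Y_perp_XW vY 1 sYX sWX sWY (mat 1)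
        = vY - (sWY - b *\<^sub>R sWX) \<bullet> (sWY - b *\<^sub>R sWX) - 2 * b * sYX + b^2"
  proof -
    have kb: "\<beta> * (1 - sWX \<bullet> sWX) = sYX - sWY \<bullet> sWX" using pos by (simp add: \<beta>_def)
    have sY: "sYX = \<beta> * (1 - sWX \<bullet> sWX) + sWY \<bullet> sWX" using kb by simp
    show ?thesis
      unfolding K0 beta_med_def var_Y_perp_XW_def P
      by (simp add: inner_diff_left inner_diff_right inner_commute[of sWX sWY] algebra_simps power2_eq_square)
        (simp add: sY algebra_simps)
  qed
  have main: "(sYX = b * 1 + g1 \<bullet> ((mat 1 + outer c rX + outer rY c + outer rY rX) *v p1) \<and>
        sWY = b *\<^sub>R sWX + (g1 v* (mat 1 + outer rY c)) \<and>
        sWX = p1 v* (mat 1 + outer rX c) \<and>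
        vY > b^2 * 1 + g1 \<bullet> ((mat 1 + outer rY rY + 2 *\<^sub>R outer rY c) *v g1)
             + 2 * b * (g1 \<bullet> ((mat 1 + outer c rX + outer rY c + outer rY rX) *v p1)) \<and>
        1 > p1 \<bullet> ((mat 1 + 2 *\<^sub>R outer rX c + outer rX rX) *v p1) \<and>
        1 > c \<bullet> (matrix_inv (mat 1) *v c)) \<longleftrightarrow>
       ((p1 \<bullet> rX) * (g1 \<bullet> rY) * (1 - (norm c)^2) = k1 sYX sWX sWY (mat 1) - b * k0 1 sWX (mat 1) \<and>
       (mat 1 + outer c rY) *v g1 = sWY - b *\<^sub>R sWX \<and>
       (mat 1 + outer c rX) *v p1 = sWX \<and>
       (g1 \<bullet> rY)^2 * (1 - (norm c)^2) <
          k0 1 sWX (mat 1) * (beta_med 1 sYX sWX sWY (mat 1) - b)^2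
          + var_Y_perp_XW vY 1 sYX sWX sWY (mat 1) \<and>
       (p1 \<bullet> rX)^2 * (1 - (norm c)^2) < k0 1 sWX (mat 1) \<and>
       (norm c)^2 < 1)" (is "?B \<longleftrightarrow> ?T") for p1 g1 :: "real^'d"
  proof -
    define a where "a = p1 \<bullet> rX"
    define g where "g = g1 \<bullet> rY"
    have M1: "g1 \<bullet> ((mat 1 + outer c rX + outer rY c + outer rY rX) *v p1)
       = g1 \<bullet> p1 + a * (g1 \<bullet> c) + g * (c \<bullet> p1) + g * a"
      by (simp add: algebra_simps outer_mv inner_add_right a_def g_def inner_commute)
    have M2: "g1 v* (mat 1 + outer rY c) = g1 + g *\<^sub>R c"
      by (simp add: algebra_simps outer_vm g_def)
    have M3: "p1 v* (mat 1 + outer rX c) = p1 + a *\<^sub>R c"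
      by (simp add: algebra_simps outer_vm a_def)
    have M2': "(mat 1 + outer c rY) *v g1 = g1 + g *\<^sub>R c"
      by (simp add: algebra_simps outer_mv g_def inner_commute)
    have M3': "(mat 1 + outer c rX) *v p1 = p1 + a *\<^sub>R c"
      by (simp add: algebra_simps outer_mv a_def inner_commute)
    have M4: "g1 \<bullet> ((mat 1 + outer rY rY + 2 *\<^sub>R outer rY c) *v g1)
       = g1 \<bullet> g1 + g * g + 2 * g * (c \<bullet> g1)"
      by (simp add: algebra_simps outer_mv smult_mv inner_add_right g_def inner_commute)
    have M5: "p1 \<bullet> ((mat 1 + 2 *\<^sub>R outer rX c + outer rX rX) *v p1)
       = p1 \<bullet> p1 + 2 * a * (c \<bullet> p1) + a * a"
      by (simp add: algebra_simps outer_mv smult_mv inner_add_right a_def inner_commute)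
    have N: "(norm c)^2 = c \<bullet> c" by (simp add: power2_norm_eq_inner)
    show ?thesis
    proof
      assume B: ?B
      have e3: "sWX = p1 + a *\<^sub>R c" using B M3 by simp
      have e2: "sWY - b *\<^sub>R sWX = g1 + g *\<^sub>R c" using B M2 by simp
      have e1: "sYX = b + (g1 \<bullet> p1 + a * (g1 \<bullet> c) + g * (c \<bullet> p1) + g * a)" using B M1 by simp
      have sWY: "sWY = g1 + g *\<^sub>R c + b *\<^sub>R (p1 + a *\<^sub>R c)" using e2 e3 by (simp add: algebra_simps)
      show ?T unfolding R unfolding K0 K1 N M2' M3' a_def[symmetric] g_def[symmetric]
      proof (intro conjI)
        show "a * g * (1 - c \<bullet> c) = sYX - sWY \<bullet> sWX - b * (1 - sWX \<bullet> sWX)"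
          unfolding e1 sWY e3 by (simp add: algebra_simps inner_add_left inner_add_right inner_commute)
      next
        show "g1 + g *\<^sub>R c = sWY - b *\<^sub>R sWX" using e2 by simp
      next
        show "p1 + a *\<^sub>R c = sWX" using e3 by simp
      next
        have "vY > b^2 + (g1 \<bullet> g1 + g * g + 2 * g * (c \<bullet> g1)) + 2 * b * (sYX - b)"
          using B M4 M1 e1 by simp
        then show "g\<^sup>2 * (1 - c \<bullet> c) < vY - (sWY - b *\<^sub>R sWX) \<bullet> (sWY - b *\<^sub>R sWX) - 2 * b * sYX + b\<^sup>2"
          unfolding e2 by (simp add: algebra_simps inner_add_left inner_add_right inner_commute power2_eq_square)
      next
        have "1 > p1 \<bullet> p1 + 2 * a * (c \<bullet> p1) + a * a" using B M5 by simp
        then show "a\<^sup>2 * (1 - c \<bullet> c) < 1 - sWX \<bullet> sWX"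
          unfolding e3 by (simp add: algebra_simps inner_add_left inner_add_right inner_commute power2_eq_square)
      next
        show "c \<bullet> c < 1" using B by (simp add: minv1)
      qed
    next
      assume T: ?T
      have e3: "sWX = p1 + a *\<^sub>R c" using T M3' by simp
      have e2: "sWY - b *\<^sub>R sWX = g1 + g *\<^sub>R c" using T M2' by simp
      have sWY: "sWY = g1 + g *\<^sub>R c + b *\<^sub>R (p1 + a *\<^sub>R c)" using e2 e3 by (simp add: algebra_simps)
      have t1: "a * g * (1 - c \<bullet> c) = sYX - sWY \<bullet> sWX - b * (1 - sWX \<bullet> sWX)"
        using T unfolding K0 K1 N a_def[symmetric] g_def[symmetric] by simp
      have e1: "sYX = b + (g1 \<bullet> p1 + a * (g1 \<bullet> c) + g * (c \<bullet> p1) + g * a)"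
        using t1 unfolding sWY e3 by (simp add: algebra_simps inner_add_left inner_add_right inner_commute)
      show ?B unfolding M1 M2 M3 M4 M5
      proof (intro conjI)
        show "sYX = b * 1 + (g1 \<bullet> p1 + a * (g1 \<bullet> c) + g * (c \<bullet> p1) + g * a)" using e1 by simp
      next
        show "sWY = b *\<^sub>R sWX + (g1 + g *\<^sub>R c)" using e2 by (simp add: algebra_simps)
      next
        show "sWX = p1 + a *\<^sub>R c" by (rule e3)
      next
        have "g\<^sup>2 * (1 - c \<bullet> c) < vY - (sWY - b *\<^sub>R sWX) \<bullet> (sWY - b *\<^sub>R sWX) - 2 * b * sYX + b\<^sup>2"
          using T unfolding R N g_def[symmetric] by simp
        then have "vY > b^2 + (g1 \<bullet> g1 + g * g + 2 * g * (c \<bullet> g1)) + 2 * b * (sYX - b)"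
          unfolding e2 by (simp add: algebra_simps inner_add_left inner_add_right inner_commute power2_eq_square)
        then show "vY > b^2 * 1 + (g1 \<bullet> g1 + g * g + 2 * g * (c \<bullet> g1)) + 2 * b * (g1 \<bullet> p1 + a * (g1 \<bullet> c) + g * (c \<bullet> p1) + g * a)"
          using e1 by simp
      next
        have "a\<^sup>2 * (1 - c \<bullet> c) < 1 - sWX \<bullet> sWX" using T unfolding K0 N a_def[symmetric] by simp
        then show "1 > p1 \<bullet> p1 + 2 * a * (c \<bullet> p1) + a * a"
          unfolding e3 by (simp add: algebra_simps inner_add_left inner_add_right inner_commute power2_eq_square)
      next
        show "1 > c \<bullet> (matrix_inv (mat 1) *v c)" using T by (simp add: minv1 N)
      qed
    qed
  qed
  show ?thesis unfolding Bset_def mem_Collect_eq using main by blast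
qed

end
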